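(* Let $G$ be a signed digraph with $n$ vertices and without positive cycles, and let $f$ be a Boolean network on $G$ having a fixed point. Then $f$ has a synchronizing word of length $n$.
   Context: A signed digraph on $V$ is $(V,E)$ with $E\subseteq V\times V\times\{-1,1\}$; cycles have no repeated vertices (a loop is a cycle) and their sign is the product of arc signs. A Boolean network (BN) is $f:\{0,1\}^V\to\{0,1\}^V$; its signed interaction digraph has a positive (negative) arc from $j$ to $i$ iff for some $x$ with $x_j=0$, $f_i(x+e_j)-f_i(x)$ is positive (negative). A BN on $G$ is one whose signed interaction digraph is $G$. $f^i(x)$ is $x$ with $x_i$ replaced by $f_i(x)$; $f^{i_1\cdots i_\ell}=f^{i_\ell}\circ\cdots\circ f^{i_1}$; $w$ is synchronizing if $f^w$ is constant. *)

theory Defs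
  imports Main
begin

text \<open>Configurations are maps 'v \<Rightarrow> bool (False = 0, True = 1); a Boolean network is
  f :: ('v \<Rightarrow> bool) \<Rightarrow> ('v \<Rightarrow> bool). Signed arcs are triples (j, i, s) with s \<in> {-1,1}.\<close>

type_synonym 'v signed_digraph = "('v \<times> 'v \<times> int) set"

definition interaction_digraph :: "(('v \<Rightarrow> bool) \<Rightarrow> ('v \<Rightarrow> bool)) \<Rightarrow> 'v signed_digraph" where
  "interaction_digraph f =
     {(j, i, 1) | j i. \<exists>x. \<not> x j \<and> \<not> f x i \<and> f (x(j := True)) i}
   \<union> {(j, i, -1) | j i. \<exists>x. \<not> x j \<and> f x i \<and> \<not> f (x(j := True)) i}"

text \<open>A cycle: a nonempty list of distinct vertices vs together with a choice of arcs
  vs!k \<rightarrow> vs!((k+1) mod length vs) with signs ss!k (a loop is a cycle of length 1);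
  its sign is the product of the arc signs.\<close>
definition is_cycle :: "'v signed_digraph \<Rightarrow> 'v list \<Rightarrow> int list \<Rightarrow> bool" where
  "is_cycle G vs ss \<longleftrightarrow> vs \<noteq> [] \<and> distinct vs \<and> length ss = length vs \<and>
     (\<forall>k < length vs. (vs ! k, vs ! ((k + 1) mod length vs), ss ! k) \<in> G)"

definition has_positive_cycle :: "'v signed_digraph \<Rightarrow> bool" where
  "has_positive_cycle G \<longleftrightarrow> (\<exists>vs ss. is_cycle G vs ss \<and> prod_list ss = 1)"

text \<open>f^i(x) = x with x_i replaced by f_i(x); f^{i1...il} = f^{il} \<circ> ... \<circ> f^{i1}.\<close>
definition async_update :: "(('v \<Rightarrow> bool) \<Rightarrow> ('v \<Rightarrow> bool)) \<Rightarrow> 'v \<Rightarrow> ('v \<Rightarrow> bool) \<Rightarrow> ('v \<Rightarrow> bool)" where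
  "async_update f i x = x(i := f x i)"

definition word_update :: "(('v \<Rightarrow> bool) \<Rightarrow> ('v \<Rightarrow> bool)) \<Rightarrow> 'v list \<Rightarrow> ('v \<Rightarrow> bool) \<Rightarrow> ('v \<Rightarrow> bool)" where
  "word_update f w = fold (async_update f) w"

definition synchronizing :: "(('v \<Rightarrow> bool) \<Rightarrow> ('v \<Rightarrow> bool)) \<Rightarrow> 'v list \<Rightarrow> bool" where
  "synchronizing f w \<longleftrightarrow> (\<exists>c. \<forall>x. word_update f w x = c)"

end

theory Submission
  imports Defs
begin

lemma cycle_exists:
  assumes fin: "finite T" and ne: "T \<noteq> {}" and pred: "\<forall>i\<in>T. \<exists>j\<in>T. R j i"
  shows "\<exists>vs. vs \<noteq> [] \<and> distinct vs \<and> set vs \<subseteq> T \<and>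
     (\<forall>k < length vs. R (vs ! k) (vs ! ((k + 1) mod length vs)))"
proof -
  let ?C = "\<exists>vs. vs \<noteq> [] \<and> distinct vs \<and> set vs \<subseteq> T \<and>
     (\<forall>k < length vs. R (vs ! k) (vs ! ((k + 1) mod length vs)))"
  have main: "?C \<or> (\<exists>ps. distinct ps \<and> length ps = Suc k \<and> set ps \<subseteq> T \<and>
      (\<forall>m. Suc m < length ps \<longrightarrow> R (ps ! m) (ps ! Suc m)))" for k
  proof (induction k)
    case 0
    from ne obtain i0 where "i0 \<in> T" by blast
    then show ?case by (intro disjI2 exI[of _ "[i0]"]) auto
  next
    case (Suc k)
    show ?case
    proof (cases ?C)
      case True then show ?thesis by blast
    next
      case False
      with Suc obtain ps where ps: "distinct ps" "length ps = Suc k" "set ps \<subseteq> T"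
        "\<forall>m. Suc m < length ps \<longrightarrow> R (ps ! m) (ps ! Suc m)" by blast
      have "ps ! 0 \<in> T" using ps by (metis nth_mem subsetD zero_less_Suc)
      then obtain j where j: "j \<in> T" "R j (ps ! 0)" using pred by blast
      show ?thesis
      proof (cases "j \<in> set ps")
        case False
        have "\<forall>m. Suc m < length (j # ps) \<longrightarrow> R ((j # ps) ! m) ((j # ps) ! Suc m)"
        proof (intro allI impI)
          fix m assume "Suc m < length (j # ps)"
          then show "R ((j # ps) ! m) ((j # ps) ! Suc m)"
            using ps(4) j(2) by (cases m) auto
        qed
        then show ?thesis using False ps j
          by (intro disjI2 exI[of _ "j # ps"]) auto
      next
        case True
        then obtain t where t: "t < length ps" "ps ! t = j" by (metis in_set_conv_nth)
        let ?vs = "take (Suc t) ps"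
        have len: "length ?vs = Suc t" using t by simp
        have "\<forall>m < length ?vs. R (?vs ! m) (?vs ! ((m + 1) mod length ?vs))"
        proof (intro allI impI)
          fix m assume m: "m < length ?vs"
          show "R (?vs ! m) (?vs ! ((m + 1) mod length ?vs))"
          proof (cases "m < t")
            case True
            then show ?thesis using ps(4) t len by simp
          next
            case False
            then have "m = t" using m len by simp
            then show ?thesis using t j len by simp
          qed
        qed
        then have ?C using ps len
          by (intro exI[of _ ?vs]) (auto dest: in_set_takeD)
        then show ?thesis by blast
      qed
    qed
  qed
  from main[of "card T"] show ?thesis
  proof
    assume "\<exists>ps. distinct ps \<and> length ps = Suc (card T) \<and> set ps \<subseteq> T \<and>
      (\<forall>m. Suc m < length ps \<longrightarrow> R (ps ! m) (ps ! Suc m))"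
    then obtain ps where "distinct ps" "length ps = Suc (card T)" "set ps \<subseteq> T" by blast
    then have "card (set ps) = Suc (card T)" "card (set ps) \<le> card T"
      using distinct_card card_mono fin by metis+
    then show ?thesis by simp
  qed
qed

lemma flip_lemma:
  fixes f :: "('v \<Rightarrow> bool) \<Rightarrow> ('v \<Rightarrow> bool)"
  assumes "finite D" and fz: "f z i = z i"
  shows "\<forall>y. (\<forall>j. j \<notin> D \<longrightarrow> y j = z j) \<longrightarrow> f y i \<noteq> z i \<longrightarrow>
     (\<exists>j\<in>D. \<exists>x. x j = z j \<and> f x i = z i \<and> f (x(j := \<not> z j)) i \<noteq> z i)"
  using assms(1)
proof (induction D rule: finite_induct)
  case empty
  show ?case
  proof (intro allI impI)
    fix y :: "'v \<Rightarrow> bool" assume h: "\<forall>j. j \<notin> {} \<longrightarrow> y j = z j" "f y i \<noteq> z i"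
    from h(1) have "y = z" by blast
    with h(2) fz have False by simp
    then show "\<exists>j\<in>{}. \<exists>x. x j = z j \<and> f x i = z i \<and> f (x(j := \<not> z j)) i \<noteq> z i" ..
  qed
next
  case (insert a D)
  show ?case
  proof (intro allI impI)
    fix y assume y: "\<forall>j. j \<notin> insert a D \<longrightarrow> y j = z j" and fy: "f y i \<noteq> z i"
    define y' where "y' = y(a := z a)"
    show "\<exists>j\<in>insert a D. \<exists>x. x j = z j \<and> f x i = z i \<and> f (x(j := \<not> z j)) i \<noteq> z i"
    proof (cases "f y' i = z i")
      case False
      have "\<forall>j. j \<notin> D \<longrightarrow> y' j = z j" using y unfolding y'_def by simp
      then show ?thesis using insert.IH False by blast
    next
      case True
      have ne: "y a \<noteq> z a"
      proof
        assume "y a = z a"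
        then have "y' = y" unfolding y'_def using fun_upd_triv[of y a] by simp
        with True fy show False by simp
      qed
      have "y'(a := \<not> z a) = y"
      proof
        fix v show "(y'(a := \<not> z a)) v = y v" using ne unfolding y'_def by (cases "v = a") auto
      qed
      moreover have "y' a = z a" unfolding y'_def by simp
      ultimately show ?thesis using True fy by blast
    qed
  qed
qed

definition sg :: "bool \<Rightarrow> int" where "sg b = (if b then 1 else -1)"

lemma arc_lemma:
  assumes "x j = z j" "f x i = z i" "f (x(j := \<not> z j)) i \<noteq> z i"
  shows "(j, i, sg (z j) * sg (z i)) \<in> interaction_digraph f"
proof (cases "z j")
  case True
  let ?x' = "x(j := False)"
  have e: "?x'(j := True) = x" using True assms(1) by (auto simp: fun_eq_iff)
  show ?thesis
  proof (cases "z i")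
    case True
    then show ?thesis using \<open>z j\<close> assms e unfolding interaction_digraph_def sg_def
      by (intro UnI1) (auto intro!: exI[of _ ?x'])
  next
    case False
    then show ?thesis using \<open>z j\<close> assms e unfolding interaction_digraph_def sg_def
      by (intro UnI2) (auto intro!: exI[of _ ?x'])
  qed
next
  case False
  show ?thesis
  proof (cases "z i")
    case True
    then show ?thesis using \<open>\<not> z j\<close> assms unfolding interaction_digraph_def sg_def
      by (intro UnI2) (auto intro!: exI[of _ x])
  next
    case c: False
    then show ?thesis using \<open>\<not> z j\<close> assms unfolding interaction_digraph_def sg_def
      by (intro UnI1) (auto intro!: exI[of _ x])
  qed
qed

lemma prod_map2:
  "length xs = length ys \<Longrightarrow> prod_list (map2 (*) xs ys) = prod_list xs * (prod_list ys :: int)"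
  by (induction xs ys rule: list_induct2) auto

lemma prod_rotate1: "prod_list (rotate1 xs) = (prod_list xs :: int)"
  by (cases xs) auto

lemma prod_sg: "prod_list (map sg vs) = 1 \<or> prod_list (map sg vs) = -1"
  by (induction vs) (auto simp: sg_def)

theorem proposition9:
  fixes f :: "('v::finite \<Rightarrow> bool) \<Rightarrow> ('v \<Rightarrow> bool)"
  assumes "\<not> has_positive_cycle (interaction_digraph f)"
    and "\<exists>x. f x = x"
  shows "\<exists>w. length w = card (UNIV :: 'v set) \<and> synchronizing f w"
proof -
  obtain z where z: "f z = z" using assms(2) by blast
  let ?R = "\<lambda>j i. \<exists>x. x j = z j \<and> f x i = z i \<and> f (x(j := \<not> z j)) i \<noteq> z i"
  have nocyc: False if T: "T \<noteq> {}" "\<forall>i\<in>T. \<exists>j\<in>T. ?R j i" for T :: "'v set"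
  proof -
    obtain vs where vs: "vs \<noteq> []" "distinct vs" "\<forall>k < length vs. ?R (vs ! k) (vs ! ((k + 1) mod length vs))"
      using cycle_exists[of T ?R, OF finite T] by blast
    let ?s = "map (\<lambda>v. sg (z v)) vs"
    let ?ss = "map2 (*) ?s (rotate1 ?s)"
    have "is_cycle (interaction_digraph f) vs ?ss"
      unfolding is_cycle_def
    proof (intro conjI allI impI)
      fix k assume k: "k < length vs"
      have "(k + 1) mod length vs < length vs" using vs(1) by simp
      then have "?ss ! k = sg (z (vs ! k)) * sg (z (vs ! ((k + 1) mod length vs)))"
        using k by (simp add: nth_rotate1)
      moreover obtain x where "x (vs ! k) = z (vs ! k)" "f x (vs ! ((k + 1) mod length vs)) = z (vs ! ((k + 1) mod length vs))"
          "f (x(vs ! k := \<not> z (vs ! k))) (vs ! ((k + 1) mod length vs)) \<noteq> z (vs ! ((k + 1) mod length vs))"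
        using vs(3) k by blast
      ultimately show "(vs ! k, vs ! ((k + 1) mod length vs), ?ss ! k) \<in> interaction_digraph f"
        using arc_lemma[of x "vs ! k" z f "vs ! ((k + 1) mod length vs)"] by simp
    qed (use vs in auto)
    moreover have "prod_list ?ss = 1"
    proof -
      have "prod_list ?ss = prod_list ?s * prod_list ?s"
        by (simp add: prod_map2 prod_rotate1 del: rotate1.simps)
      moreover have "prod_list ?s = 1 \<or> prod_list ?s = -1"
        using prod_sg[of "map z vs"] by (simp add: comp_def)
      ultimately show ?thesis by auto
    qed
    ultimately show False using assms(1) unfolding has_positive_cycle_def by blast
  qed
  have claim: "\<forall>S. card (UNIV - S) = k \<longrightarrow> (\<exists>w. length w = k \<and>
      (\<forall>x. (\<forall>j\<in>S. x j = z j) \<longrightarrow> word_update f w x = z))" for k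
  proof (induction k)
    case 0
    show ?case
    proof (intro allI impI)
      fix S :: "'v set" assume "card (UNIV - S) = 0"
      then have "UNIV - S = {}" by simp
      then have "\<forall>x. (\<forall>j\<in>S. x j = z j) \<longrightarrow> x = z" by (auto simp: fun_eq_iff)
      then show "\<exists>w. length w = 0 \<and> (\<forall>x. (\<forall>j\<in>S. x j = z j) \<longrightarrow> word_update f w x = z)"
        by (auto simp: word_update_def)
    qed
  next
    case (Suc k)
    show ?case
    proof (intro allI impI)
      fix S :: "'v set" assume c: "card (UNIV - S) = Suc k"
      let ?T = "UNIV - S"
      have Tne: "?T \<noteq> {}" 
      proof
        assume "?T = {}"
        then have "card ?T = 0" by (simp only: card.empty)
        with c show False by simp
      qed
      have "\<exists>i\<in>?T. \<forall>x. (\<forall>j\<in>S. x j = z j) \<longrightarrow> f x i = z i"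
      proof (rule ccontr)
        assume "\<not> ?thesis"
        then have "\<forall>i\<in>?T. \<exists>j\<in>?T. ?R j i"
        proof (intro ballI)
          fix i assume "\<not> (\<exists>i\<in>?T. \<forall>x. (\<forall>j\<in>S. x j = z j) \<longrightarrow> f x i = z i)" "i \<in> ?T"
          then obtain y where y: "\<forall>j\<in>S. y j = z j" "f y i \<noteq> z i" by blast
          have fzi: "f z i = z i" using z by (rule fun_cong)
          have "\<And>j. j \<notin> ?T \<Longrightarrow> y j = z j" using y(1) by blast
          with flip_lemma[where D="?T" and z=z and i=i and f=f, OF finite fzi, rule_format, OF this y(2)]
          show "\<exists>j\<in>?T. ?R j i" by blast
        qed
        then show False by (rule nocyc[OF Tne])
      qed
      then obtain i where i: "i \<notin> S" "\<forall>x. (\<forall>j\<in>S. x j = z j) \<longrightarrow> f x i = z i" by blast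
      have "card (UNIV - insert i S) = k" using c i(1)
        by (metis Diff_insert card_Diff_singleton Diff_iff UNIV_I diff_Suc_1 finite)
      then obtain w where w: "length w = k"
        "\<forall>x. (\<forall>j\<in>insert i S. x j = z j) \<longrightarrow> word_update f w x = z" using Suc by blast
      show "\<exists>w. length w = Suc k \<and> (\<forall>x. (\<forall>j\<in>S. x j = z j) \<longrightarrow> word_update f w x = z)"
      proof (intro exI[of _ "i # w"] conjI allI impI)
        fix x assume x: "\<forall>j\<in>S. x j = z j"
        have "word_update f (i # w) x = word_update f w (async_update f i x)"
          by (simp add: word_update_def)
        also have "\<dots> = z" using w(2) x i(2) unfolding async_update_def by auto
        finally show "word_update f (i # w) x = z" .
      qed (use w in simp)
    qed
  qed
  have "card (UNIV - ({} :: 'v set)) = card (UNIV :: 'v set)" by simp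
  from claim[of "card (UNIV :: 'v set)", rule_format, OF this] obtain w where
    "length w = card (UNIV :: 'v set)" "\<forall>x. word_update f w x = z" by auto
  then show ?thesis unfolding synchronizing_def by blast
qed

end
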